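(* Let $\nu$ be a signature and let $\mathcal A\in\widetilde{\mathrm{Hinge}}_n$ be nondegenerate. Then $\rho_\nu(\mathcal A)\ne0$.
   Context: Let $V=\mathbb C^n$ with basis $e_1,\dots,e_n$. A linear relation is a subspace $P\subset V\oplus V$; $\mathrm{Ker}\,P=\{v: v\oplus0\in P\}$, $\mathrm{Dom}\,P,\mathrm{Im}\,P$ the projections to the first and second summands, $\mathrm{Indef}\,P=\{w:0\oplus w\in P\}$, $\mathrm{rk}\,P=\dim\mathrm{Dom}\,P-\dim\mathrm{Ker}\,P$. If $\dim P=n$, choose bases $f_1,\dots,f_a,g_1,\dots,g_b,h_1,\dots,h_c$ and $F_1,\dots,F_a,G_1,\dots,G_b,H_1,\dots,H_c$ of $V$ with $P$ spanned by $0\oplus F_i$, $g_j\oplus G_j$, $h_k\oplus0$; $\lambda(P)$ maps $f_1\wedge\dots\wedge f_a\wedge g_{i_1}\wedge\dots\wedge g_{i_s}$ to $F_1\wedge\dots\wedge F_a\wedge G_{i_1}\wedge\dots\wedge G_{i_s}$ and kills the other basis monomials (up to scalar); $\lambda^m(P)$ its restriction to $\Lambda^mV$. A hinge is a sequence $\mathcal P=(P_1,\dots,P_k)$ of $n$-dimensional relations with $\mathrm{Ker}\,P_j=\mathrm{Dom}\,P_{j+1}$, $\mathrm{Im}\,P_j=\mathrm{Indef}\,P_{j+1}$, $\mathrm{Dom}\,P_1=V$, $\mathrm{Im}\,P_k=V$, $\mathrm{rk}\,P_j>0$. For each $m$ there is a nonzero $\lambda^m(P_j)$, and any two nonzero ones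 are proportional; $\lambda^m(\mathcal P)$ denotes it (up to scalar). $\widetilde{\mathrm{Hinge}}_n$ is the set of tuples $\mathcal A=(c_0\lambda^0(\mathcal P),\dots,c_n\lambda^n(\mathcal P))$ with $\mathcal P$ a hinge and $c_j\in\mathbb C$; $\mathcal A$ is nondegenerate if all $c_j\ne0$. A signature is $\nu_1\ge\dots\ge\nu_n\ge0$ (integers), $\nu_{n+1}=0$; $\mathfrak H_\nu=\bigotimes_j(\Lambda^jV)^{\otimes(\nu_j-\nu_{j+1})}$; $\Xi_\nu=\bigotimes_j(e_1\wedge\dots\wedge e_j)^{\otimes(\nu_j-\nu_{j+1})}$; $\mathfrak r_\nu(A_0,\dots,A_n)=\bigotimes_jA_j^{\otimes(\nu_j-\nu_{j+1})}$; $H_\nu$ is the span of $\mathfrak r_\nu(\lambda^0_{\mathrm{cha}}(g),\dots,\lambda^n_{\mathrm{cha}}(g))\Xi_\nu$, $g\in\mathrm{GL}_n(\mathbb C)$, where $\lambda^j_{\mathrm{cha}}(g)v_1\wedge\dots\wedge v_j=gv_1\wedge\dots\wedge gv_j$; $H_\nu$ is invariant under $\mathfrak r_\nu(\mathcal A)$ for $\mathcal A\in\widetilde{\mathrm{Hinge}}_n$, and $\rho_\nu(\mathcal A)$ is the restriction of $\mathfrak r_\nu(\mathcal A)$ to $H_\nu$. *)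

theory Defs
  imports "Jordan_Normal_Form.Determinant" "HOL-Library.Function_Algebras" "HOL-Library.Product_Plus"
begin

definition Vsp :: "nat \<Rightarrow> (nat \<Rightarrow> complex) set" where
  "Vsp n = {v. \<forall>i\<ge>n. v i = 0}"

definition scl :: "complex \<Rightarrow> (nat \<Rightarrow> complex) \<Rightarrow> (nat \<Rightarrow> complex)" where
  "scl c v = (\<lambda>i. c * v i)"

definition sclp :: "complex \<Rightarrow> (nat \<Rightarrow> complex) \<times> (nat \<Rightarrow> complex) \<Rightarrow> (nat \<Rightarrow> complex) \<times> (nat \<Rightarrow> complex)" where
  "sclp c p = (scl c (fst p), scl c (snd p))"

definition is_basis :: "nat \<Rightarrow> (nat \<Rightarrow> nat \<Rightarrow> complex) \<Rightarrow> bool" where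
  "is_basis n B \<longleftrightarrow> inj_on B {..<n} \<and> \<not> module.dependent scl (B ` {..<n})
     \<and> module.span scl (B ` {..<n}) = Vsp n"

type_synonym linrel = "((nat \<Rightarrow> complex) \<times> (nat \<Rightarrow> complex)) set"

definition Ker :: "linrel \<Rightarrow> (nat \<Rightarrow> complex) set" where "Ker P = {v. (v, 0) \<in> P}"
definition Dom :: "linrel \<Rightarrow> (nat \<Rightarrow> complex) set" where "Dom P = fst ` P"
definition Im :: "linrel \<Rightarrow> (nat \<Rightarrow> complex) set" where "Im P = snd ` P"
definition Indef :: "linrel \<Rightarrow> (nat \<Rightarrow> complex) set" where "Indef P = {w. (0, w) \<in> P}"

definition rk :: "linrel \<Rightarrow> nat" where
  "rk P = vector_space.dim scl (Dom P) - vector_space.dim scl (Ker P)"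

definition ndim_rel :: "nat \<Rightarrow> linrel \<Rightarrow> bool" where
  "ndim_rel n P \<longleftrightarrow> P \<subseteq> Vsp n \<times> Vsp n \<and> module.subspace sclp P \<and> vector_space.dim sclp P = n"

text \<open>Lambda^m V has basis e_I, I an m-subset of {..<n}; vectors are functions on index sets,
  operators are matrices indexed by pairs of m-subsets.\<close>
definition msub :: "nat \<Rightarrow> nat \<Rightarrow> nat set set" where
  "msub n m = {I. I \<subseteq> {..<n} \<and> card I = m}"

text \<open>coordinates of the wedge of B s_1, ..., B s_m (s_1 < ... < s_m the elements of S)
  in the basis e_I (I = {i_1 < ... < i_m})\<close>
definition wedge :: "(nat \<Rightarrow> nat \<Rightarrow> complex) \<Rightarrow> nat set \<Rightarrow> nat set \<Rightarrow> complex" where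
  "wedge B S I = det (mat (card S) (card S)
      (\<lambda>(r, c). B (sorted_list_of_set S ! c) (sorted_list_of_set I ! r)))"

definition opapp :: "nat \<Rightarrow> nat \<Rightarrow> (nat set \<Rightarrow> nat set \<Rightarrow> complex) \<Rightarrow> (nat set \<Rightarrow> complex) \<Rightarrow> nat set \<Rightarrow> complex" where
  "opapp n m L x I = (\<Sum>J\<in>msub n m. L I J * x J)"

definition op_nonzero :: "nat \<Rightarrow> nat \<Rightarrow> (nat set \<Rightarrow> nat set \<Rightarrow> complex) \<Rightarrow> bool" where
  "op_nonzero n m L \<longleftrightarrow> (\<exists>I\<in>msub n m. \<exists>J\<in>msub n m. L I J \<noteq> 0)"

text \<open>L is (a choice of) lambda^m(P): bases f = B 0..B (a-1), g = B a..B (a+b-1), h = the rest,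
  F,G,H likewise from C; P spanned by 0(+)F_i, g_j(+)G_j, h_k(+)0; monomials in f,g,h with
  index set S go to the corresponding monomial in F,G,H if S contains all f's and no h,
  and are killed otherwise.\<close>
definition lam_rel :: "nat \<Rightarrow> nat \<Rightarrow> linrel \<Rightarrow> (nat set \<Rightarrow> nat set \<Rightarrow> complex) \<Rightarrow> bool" where
  "lam_rel n m P L \<longleftrightarrow> (\<exists>a b B C. a + b \<le> n \<and> is_basis n B \<and> is_basis n C \<and>
     P = module.span sclp ((\<lambda>i. (0, C i)) ` {..<a} \<union> (\<lambda>j. (B j, C j)) ` {a..<a+b}
                            \<union> (\<lambda>k. (B k, 0)) ` {a+b..<n}) \<and>
     (\<forall>S\<in>msub n m. \<forall>I\<in>msub n m.
        opapp n m L (wedge B S) I = (if {..<a} \<subseteq> S \<and> S \<subseteq> {..<a+b} then wedge C S I else 0)))"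

definition hinge :: "nat \<Rightarrow> linrel list \<Rightarrow> bool" where
  "hinge n Ps \<longleftrightarrow> Ps \<noteq> [] \<and> (\<forall>P\<in>set Ps. ndim_rel n P \<and> rk P > 0) \<and>
     (\<forall>j. Suc j < length Ps \<longrightarrow> Ker (Ps ! j) = Dom (Ps ! Suc j) \<and> Im (Ps ! j) = Indef (Ps ! Suc j)) \<and>
     Dom (hd Ps) = Vsp n \<and> Im (last Ps) = Vsp n"

text \<open>A = (c_0 lambda^0(P), ..., c_n lambda^n(P)); A m is the operator on Lambda^m V\<close>
definition hinge_tuple :: "nat \<Rightarrow> (nat \<Rightarrow> nat set \<Rightarrow> nat set \<Rightarrow> complex) \<Rightarrow> (nat \<Rightarrow> complex) \<Rightarrow> bool" where
  "hinge_tuple n A c \<longleftrightarrow> (\<exists>Ps. hinge n Ps \<and> (\<forall>m\<le>n. \<exists>L.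
      (\<exists>j<length Ps. lam_rel n m (Ps ! j) L) \<and> op_nonzero n m L \<and>
      (\<forall>I\<in>msub n m. \<forall>J\<in>msub n m. A m I J = c m * L I J)))"

definition nondeg_hinge_tuple :: "nat \<Rightarrow> (nat \<Rightarrow> nat set \<Rightarrow> nat set \<Rightarrow> complex) \<Rightarrow> bool" where
  "nondeg_hinge_tuple n A \<longleftrightarrow> (\<exists>c. hinge_tuple n A c \<and> (\<forall>m\<le>n. c m \<noteq> 0))"

text \<open>nu_1 >= ... >= nu_n >= 0 (values of nu outside 1..n are irrelevant); nu_{n+1} = 0\<close>
definition signature :: "nat \<Rightarrow> (nat \<Rightarrow> nat) \<Rightarrow> bool" where
  "signature n \<nu> \<longleftrightarrow> (\<forall>j. 1 \<le> j \<and> j < n \<longrightarrow> \<nu> (Suc j) \<le> \<nu> j)"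

definition mult :: "nat \<Rightarrow> (nat \<Rightarrow> nat) \<Rightarrow> nat \<Rightarrow> nat" where
  "mult n \<nu> j = \<nu> j - (if j < n then \<nu> (Suc j) else 0)"

text \<open>degrees of the tensor factors of h_nu = (x)_j (Lambda^j V)^(x)(nu_j - nu_{j+1})\<close>
definition degs :: "nat \<Rightarrow> (nat \<Rightarrow> nat) \<Rightarrow> nat list" where
  "degs n \<nu> = concat (map (\<lambda>j. replicate (mult n \<nu> j) j) [1..<Suc n])"

definition tidx :: "nat \<Rightarrow> nat list \<Rightarrow> nat set list set" where
  "tidx n ds = {Is. length Is = length ds \<and> (\<forall>k<length ds. Is ! k \<in> msub n (ds ! k))}"

definition tscl :: "complex \<Rightarrow> (nat set list \<Rightarrow> complex) \<Rightarrow> (nat set list \<Rightarrow> complex)" where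
  "tscl c x = (\<lambda>Is. c * x Is)"

definition rnu :: "nat \<Rightarrow> (nat \<Rightarrow> nat) \<Rightarrow> (nat \<Rightarrow> nat set \<Rightarrow> nat set \<Rightarrow> complex)
     \<Rightarrow> (nat set list \<Rightarrow> complex) \<Rightarrow> (nat set list \<Rightarrow> complex)" where
  "rnu n \<nu> A x = (\<lambda>Is. if Is \<in> tidx n (degs n \<nu>) then
      (\<Sum>Js\<in>tidx n (degs n \<nu>). (\<Prod>k<length (degs n \<nu>).
          A (degs n \<nu> ! k) (Is ! k) (Js ! k)) * x Js) else 0)"

text \<open>Xi_nu = (x)_j (e_1 /\ ... /\ e_j)^(x)(nu_j - nu_{j+1}) (0-based indices)\<close>
definition Xi :: "nat \<Rightarrow> (nat \<Rightarrow> nat) \<Rightarrow> nat set list \<Rightarrow> complex" where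
  "Xi n \<nu> = (\<lambda>Is. if Is = map (\<lambda>d. {..<d}) (degs n \<nu>) then 1 else 0)"

definition GL :: "nat \<Rightarrow> (nat \<Rightarrow> nat \<Rightarrow> complex) \<Rightarrow> bool" where
  "GL n g \<longleftrightarrow> det (mat n n (\<lambda>(r, c). g r c)) \<noteq> 0"

text \<open>lambda^m_cha(g): e_J = e_{j_1} /\ ... /\ e_{j_m} goes to g e_{j_1} /\ ... /\ g e_{j_m}\<close>
definition lam_cha :: "(nat \<Rightarrow> nat \<Rightarrow> complex) \<Rightarrow> nat \<Rightarrow> nat set \<Rightarrow> nat set \<Rightarrow> complex" where
  "lam_cha g m I J = wedge (\<lambda>k r. g r k) J I"

definition Hnu :: "nat \<Rightarrow> (nat \<Rightarrow> nat) \<Rightarrow> (nat set list \<Rightarrow> complex) set" where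
  "Hnu n \<nu> = module.span tscl {rnu n \<nu> (lam_cha g) (Xi n \<nu>) | g. GL n g}"

text \<open>rho_nu(A) = restriction of r_nu(A) to H_nu is nonzero\<close>
definition rho_nonzero :: "nat \<Rightarrow> (nat \<Rightarrow> nat) \<Rightarrow> (nat \<Rightarrow> nat set \<Rightarrow> nat set \<Rightarrow> complex) \<Rightarrow> bool" where
  "rho_nonzero n \<nu> A \<longleftrightarrow> (\<exists>h\<in>Hnu n \<nu>. rnu n \<nu> A h \<noteq> 0)"

end

theory Submission imports Defs begin

definition polyfun :: "(complex \<Rightarrow> complex) \<Rightarrow> bool" where
  "polyfun f \<longleftrightarrow> (\<exists>p. \<forall>t. f t = poly p t)"

lemma polyfun_const[intro]: "polyfun (\<lambda>t. c)"
  unfolding polyfun_def by (rule exI[of _ "[:c:]"]) simp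

lemma polyfun_id[intro]: "polyfun (\<lambda>t. t)"
  unfolding polyfun_def by (rule exI[of _ "[:0,1:]"]) simp

lemma polyfun_add[intro]: "polyfun f \<Longrightarrow> polyfun g \<Longrightarrow> polyfun (\<lambda>t. f t + g t)"
  unfolding polyfun_def by (metis poly_add)

lemma polyfun_mult[intro]: "polyfun f \<Longrightarrow> polyfun g \<Longrightarrow> polyfun (\<lambda>t. f t * g t)"
  unfolding polyfun_def by (metis poly_mult)

lemma polyfun_sum: "(\<And>x. x \<in> S \<Longrightarrow> polyfun (f x)) \<Longrightarrow> polyfun (\<lambda>t. \<Sum>x\<in>S. f x t)"
proof (induction S rule: infinite_finite_induct)
  case (insert x F) then show ?case by (simp add: polyfun_add)
qed auto

lemma polyfun_prod: "(\<And>x. x \<in> S \<Longrightarrow> polyfun (f x)) \<Longrightarrow> polyfun (\<lambda>t. \<Prod>x\<in>S. f x t)"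
proof (induction S rule: infinite_finite_induct)
  case (insert x F) then show ?case by (simp add: polyfun_mult)
qed auto

lemma polyfun_det:
  assumes "\<And>i j. i < d \<Longrightarrow> j < d \<Longrightarrow> polyfun (\<lambda>t. M t i j)"
  shows "polyfun (\<lambda>t. det (mat d d (\<lambda>(i,j). M t i j)))"
proof -
  have "det (mat d d (\<lambda>(i,j). M t i j)) = (\<Sum> p \<in> {p. p permutes {0 ..< d}}.
     signof p * (\<Prod> i = 0 ..< d. M t i (p i)))" for t
    by (subst det_def'[of _ d]) (auto intro!: sum.cong prod.cong simp: permutes_in_image)
  moreover have "polyfun (\<lambda>t. \<Sum> p \<in> {p. p permutes {0 ..< d}}.
     signof p * (\<Prod> i = 0 ..< d. M t i (p i)))"
    by (intro polyfun_sum polyfun_mult polyfun_const polyfun_prod assms)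
       (auto simp: permutes_in_image)
  ultimately show ?thesis by simp
qed

definition line :: "(nat \<Rightarrow> nat \<Rightarrow> complex) \<Rightarrow> (nat \<Rightarrow> nat \<Rightarrow> complex) \<Rightarrow> complex \<Rightarrow> nat \<Rightarrow> nat \<Rightarrow> complex" where
  "line p q t = (\<lambda>r c. (1 - t) * p r c + t * q r c)"

lemma line0[simp]: "line p q 0 = p" and line1[simp]: "line p q 1 = q"
  by (auto simp: line_def)

lemma common_nonzero:
  assumes "finite D"
    and lp: "\<And>k p q. k \<in> D \<Longrightarrow> polyfun (\<lambda>t. \<phi> k (line p q t))"
    and nz: "\<And>k. k \<in> D \<Longrightarrow> \<exists>g. \<phi> k g \<noteq> 0"
  shows "\<exists>g. \<forall>k\<in>D. \<phi> k g \<noteq> 0"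
  using assms
proof (induction D rule: finite_induct)
  case empty then show ?case by simp
next
  case (insert k0 D)
  then obtain p where p: "\<forall>k\<in>D. \<phi> k p \<noteq> 0" by auto
  obtain q where q: "\<phi> k0 q \<noteq> 0" using insert.prems(2) by blast
  have "\<forall>k\<in>insert k0 D. \<exists>P. P \<noteq> 0 \<and> (\<forall>t. \<phi> k (line p q t) = poly P t)"
  proof
    fix k assume k: "k \<in> insert k0 D"
    then obtain P where P: "\<forall>t. \<phi> k (line p q t) = poly P t"
      using insert.prems(1) unfolding polyfun_def by blast
    have "P \<noteq> 0"
    proof
      assume "P = 0"
      then have "\<phi> k p = 0" "\<phi> k q = 0" using P[rule_format, of 0] P[rule_format, of 1] by auto
      then show False using k p q by auto
    qed
    with P show "\<exists>P. P \<noteq> 0 \<and> (\<forall>t. \<phi> k (line p q t) = poly P t)" by blast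
  qed
  then obtain PP where PP: "\<And>k. k \<in> insert k0 D \<Longrightarrow> PP k \<noteq> 0 \<and> (\<forall>t. \<phi> k (line p q t) = poly (PP k) t)"
    by metis
  have "finite (\<Union>k\<in>insert k0 D. {t. poly (PP k) t = 0})"
    using PP insert.hyps(1) by (auto intro!: poly_roots_finite)
  then obtain t where t: "t \<notin> (\<Union>k\<in>insert k0 D. {t. poly (PP k) t = 0})"
    by (metis ex_new_if_finite infinite_UNIV_char_0)
  show ?case
    by (rule exI[of _ "line p q t"]) (use t PP in auto)
qed


lemma tidx_Cons: "tidx n (d#ds) = (\<lambda>(K,Js). K#Js) ` (msub n d \<times> tidx n ds)"
proof safe
  fix Is assume "Is \<in> tidx n (d#ds)"
  then obtain K Js where Is: "Is = K#Js" and l: "length Js = length ds"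
    and h: "\<forall>k<Suc (length ds). Is ! k \<in> msub n ((d#ds) ! k)"
    unfolding tidx_def by (auto simp: length_Suc_conv)
  have "K \<in> msub n d" using h[rule_format, of 0] Is by simp
  moreover have "Js \<in> tidx n ds" unfolding tidx_def using l h Is by auto
  ultimately show "Is \<in> (\<lambda>(K,Js). K#Js) ` (msub n d \<times> tidx n ds)" using Is by auto
next
  fix K Js assume "K \<in> msub n d" "Js \<in> tidx n ds"
  then show "K#Js \<in> tidx n (d#ds)" unfolding tidx_def by (auto simp: nth_Cons split: nat.splits)
qed

lemma sum_prod_tidx:
  fixes f :: "nat \<Rightarrow> nat set \<Rightarrow> complex"
  shows
  "(\<Sum>Js\<in>tidx n ds. \<Prod>k<length ds. f k (Js!k)) = (\<Prod>k<length ds. \<Sum>K\<in>msub n (ds!k). f k K)"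
proof (induction ds arbitrary: f)
  case Nil
  have "tidx n [] = {[]}" unfolding tidx_def by auto
  then show ?case by simp
next
  case (Cons d ds)
  have inj: "inj_on (\<lambda>(K,Js). K#Js) (msub n d \<times> tidx n ds)" by (auto simp: inj_on_def)
  have "(\<Sum>Js\<in>tidx n (d#ds). \<Prod>k<length (d#ds). f k (Js!k))
     = (\<Sum>(K,Js)\<in>msub n d \<times> tidx n ds. \<Prod>k<Suc (length ds). f k ((K#Js)!k))"
    unfolding tidx_Cons by (subst sum.reindex[OF inj]) (simp add: case_prod_unfold)
  also have "\<dots> = (\<Sum>(K,Js)\<in>msub n d \<times> tidx n ds. f 0 K * (\<Prod>k<length ds. f (Suc k) (Js!k)))"
    by (subst prod.lessThan_Suc_shift) simp
  also have "\<dots> = (\<Sum>K\<in>msub n d. \<Sum>Js\<in>tidx n ds. f 0 K * (\<Prod>k<length ds. f (Suc k) (Js!k)))"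
    by (simp add: sum.cartesian_product)
  also have "\<dots> = (\<Sum>K\<in>msub n d. f 0 K) * (\<Sum>Js\<in>tidx n ds. \<Prod>k<length ds. f (Suc k) (Js!k))"
    by (rule sum_product[symmetric])
  also have "\<dots> = (\<Sum>K\<in>msub n d. f 0 K) * (\<Prod>k<length ds. \<Sum>K\<in>msub n (ds!k). f (Suc k) K)"
    using Cons.IH[of "\<lambda>k. f (Suc k)"] by simp
  also have "\<dots> = (\<Prod>k<length (d#ds). \<Sum>K\<in>msub n ((d#ds)!k). f k K)"
    unfolding length_Cons prod.lessThan_Suc_shift by simp
  finally show ?case .
qed

lemma det_zero_col:
  assumes "c < d" "\<And>r. r < d \<Longrightarrow> M r c = 0"
  shows "det (mat d d (\<lambda>(r,c). M r c)) = (0::complex)"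
proof -
  have prodz: "(\<Prod>i = 0..<d. M i (p i)) = 0" if p: "p permutes {0..<d}" for p
  proof (rule prod_zero)
    let ?i = "Hilbert_Choice.inv p c"
    have "?i \<in> {0..<d}" using p assms(1) by (simp add: permutes_inv permutes_in_image)
    moreover have "p ?i = c" using p by (simp add: permutes_inverses(1))
    ultimately show "\<exists>a\<in>{0..<d}. M a (p a) = 0"
      using assms by (intro bexI[of _ ?i]) auto
  qed simp
  have deteq: "det (mat d d (\<lambda>(r,c). M r c)) = (\<Sum> p \<in> {p. p permutes {0 ..< d}}.
     signof p * (\<Prod> i = 0 ..< d. M i (p i)))"
    by (subst det_def'[of _ d]) (auto intro!: sum.cong prod.cong simp: permutes_in_image)
  show ?thesis unfolding deteq by (rule sum.neutral) (simp add: prodz)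
qed

lemma sl_lessThan: "sorted_list_of_set {..<d} = [0..<d]"
  by (metis atLeast0LessThan sorted_list_of_set_range)

lemma lam_cha_col: "lam_cha g d K {..<d} = det (mat d d (\<lambda>(r,c). g (sorted_list_of_set K ! r) c))"
  unfolding lam_cha_def wedge_def by (auto simp: sl_lessThan intro!: arg_cong[where f=det] eq_matI)

lemma minor_delta:
  assumes K: "K \<in> msub n d" and J: "J \<in> msub n d"
  shows "lam_cha (\<lambda>r c. if c < d \<and> r = sorted_list_of_set J ! c then 1 else 0) d K {..<d}
     = (if K = J then 1 else 0)"
proof -
  have fK: "finite K" "card K = d" using K finite_subset[of K "{..<n}"] unfolding msub_def by auto
  have fJ: "finite J" "card J = d" using J finite_subset[of J "{..<n}"] unfolding msub_def by auto
  show ?thesis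
  proof (cases "K = J")
    case True
    have "mat d d (\<lambda>(r,c). (if c < d \<and> sorted_list_of_set K ! r = sorted_list_of_set J ! c then 1 else 0))
          = (1\<^sub>m d :: complex mat)"
      using True fK by (intro eq_matI) (auto simp: nth_eq_iff_index_eq)
    then show ?thesis using True by (simp add: lam_cha_col)
  next
    case False
    have "\<not> J \<subseteq> K"
    proof
      assume "J \<subseteq> K" then have "J = K" using fK fJ card_subset_eq by metis
      then show False using False by simp
    qed
    then obtain x where x: "x \<in> J" "x \<notin> K" by auto
    then obtain c where c: "c < d" "sorted_list_of_set J ! c = x"
      using fJ by (metis in_set_conv_nth length_sorted_list_of_set set_sorted_list_of_set)
    have "det (mat d d (\<lambda>(r,c). (if c < d \<and> sorted_list_of_set K ! r = sorted_list_of_set J ! c then 1 else 0 :: complex))) = 0"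
    proof (rule det_zero_col[OF c(1)])
      fix r assume "r < d"
      then have "sorted_list_of_set K ! r \<in> K" using fK
        by (metis nth_mem length_sorted_list_of_set set_sorted_list_of_set)
      then show "(if c < d \<and> sorted_list_of_set K ! r = sorted_list_of_set J ! c then 1 else 0) = 0"
        using x c by auto
    qed
    then show ?thesis using False by (simp add: lam_cha_col)
  qed
qed


lemma polyfun_diff[intro]: "polyfun f \<Longrightarrow> polyfun g \<Longrightarrow> polyfun (\<lambda>t. f t - g t)"
  unfolding polyfun_def by (metis poly_diff)

lemma polyfun_line: "polyfun (\<lambda>t. line p q t r c)"
  unfolding line_def by (intro polyfun_add polyfun_mult polyfun_diff polyfun_const polyfun_id)

lemma finite_msub: "finite (msub n m)"
  by (rule finite_subset[of _ "Pow {..<n}"]) (auto simp: msub_def)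

lemma finite_tidx: "finite (tidx n ds)"
proof (induction ds)
  case Nil
  have "tidx n [] = {[]}" unfolding tidx_def by auto
  then show ?case by simp
next
  case (Cons d ds)
  then show ?case unfolding tidx_Cons by (auto intro: finite_msub)
qed

lemma module_tscl: "Modules.module tscl"
  by unfold_locales (auto simp: tscl_def algebra_simps fun_eq_iff)

lemma degs_le: "d \<in> set (degs n \<nu>) \<Longrightarrow> d \<le> n"
  by (auto simp: degs_def)

lemma lessThan_msub: "d \<le> n \<Longrightarrow> {..<d} \<in> msub n d"
  by (auto simp: msub_def)

lemma rnu_Xi:
  "rnu n \<nu> B (Xi n \<nu>) Js = (if Js \<in> tidx n (degs n \<nu>) then
     (\<Prod>k<length (degs n \<nu>). B (degs n \<nu> ! k) (Js!k) {..<degs n \<nu> ! k}) else 0)"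
proof -
  let ?ds = "degs n \<nu>"
  let ?K0 = "map (\<lambda>d. {..<d}) ?ds"
  have K0: "?K0 \<in> tidx n ?ds" unfolding tidx_def
    by (auto intro!: lessThan_msub degs_le[of _ n \<nu>])
  have "(\<Sum>Ks\<in>tidx n ?ds. (\<Prod>k<length ?ds. B (?ds ! k) (Js ! k) (Ks ! k)) * Xi n \<nu> Ks)
      = (\<Sum>Ks\<in>tidx n ?ds. if Ks = ?K0 then (\<Prod>k<length ?ds. B (?ds ! k) (Js ! k) (Ks ! k)) else 0)"
    by (rule sum.cong) (auto simp: Xi_def)
  also have "\<dots> = (\<Prod>k<length ?ds. B (?ds ! k) (Js ! k) (?K0 ! k))"
    using K0 finite_tidx by (simp add: sum.delta')
  finally show ?thesis unfolding rnu_def by simp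
qed


theorem corollary2p15:
  fixes n :: nat and \<nu> :: "nat \<Rightarrow> nat" and A :: "nat \<Rightarrow> nat set \<Rightarrow> nat set \<Rightarrow> complex"
  assumes "signature n \<nu>"
    and "nondeg_hinge_tuple n A"
  shows "rho_nonzero n \<nu> A"
proof -
  obtain c where c: "hinge_tuple n A c" "\<forall>m\<le>n. c m \<noteq> 0"
    using assms(2) unfolding nondeg_hinge_tuple_def by blast
  have nzA: "\<forall>m. \<exists>IJ. m \<le> n \<longrightarrow> fst IJ \<in> msub n m \<and> snd IJ \<in> msub n m \<and> A m (fst IJ) (snd IJ) \<noteq> 0"
  proof
    fix m
    show "\<exists>IJ. m \<le> n \<longrightarrow> fst IJ \<in> msub n m \<and> snd IJ \<in> msub n m \<and> A m (fst IJ) (snd IJ) \<noteq> 0"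
    proof (cases "m \<le> n")
      case True
      then obtain L where L: "op_nonzero n m L" "\<forall>I\<in>msub n m. \<forall>J\<in>msub n m. A m I J = c m * L I J"
        using c(1) unfolding hinge_tuple_def by blast
      then obtain I J where IJ: "I \<in> msub n m" "J \<in> msub n m" "L I J \<noteq> 0"
        unfolding op_nonzero_def by blast
      then have "A m I J \<noteq> 0" using L(2) c(2) True by auto
      then show ?thesis using IJ by (intro exI[of _ "(I,J)"]) auto
    qed auto
  qed
  then obtain IJ where IJ: "\<And>m. m \<le> n \<Longrightarrow> fst (IJ m) \<in> msub n m \<and> snd (IJ m) \<in> msub n m \<and> A m (fst (IJ m)) (snd (IJ m)) \<noteq> 0"
    by metis
  define Ia where "Ia m = fst (IJ m)" for m
  define Ja where "Ja m = snd (IJ m)" for m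
  have Ia: "m \<le> n \<Longrightarrow> Ia m \<in> msub n m" and Ja: "m \<le> n \<Longrightarrow> Ja m \<in> msub n m"
    and AIJ: "m \<le> n \<Longrightarrow> A m (Ia m) (Ja m) \<noteq> 0" for m
    using IJ unfolding Ia_def Ja_def by auto
  define \<phi> where "\<phi> k g = (if k = Suc n then det (mat n n (\<lambda>(r,c). g r c))
      else (\<Sum>K\<in>msub n k. A k (Ia k) K * lam_cha g k K {..<k}))" for k g
  have "\<exists>g. \<forall>k\<in>{..Suc n}. \<phi> k g \<noteq> 0"
  proof (rule common_nonzero)
    fix k p q
    show "polyfun (\<lambda>t. \<phi> k (line p q t))"
    proof (cases "k = Suc n")
      case True
      then show ?thesis unfolding \<phi>_def by (simp add: polyfun_det polyfun_line)
    next
      case False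
      then show ?thesis unfolding \<phi>_def lam_cha_col
        by (simp, intro polyfun_sum polyfun_mult polyfun_const polyfun_det polyfun_line)
    qed
  next
    fix k assume k: "k \<in> {..Suc n}"
    show "\<exists>g. \<phi> k g \<noteq> 0"
    proof (cases "k = Suc n")
      case True
      have "mat n n (\<lambda>(r,c). (\<lambda>r c. if r = c then 1 else 0 :: complex) r c) = 1\<^sub>m n"
        by (intro eq_matI) auto
      then show ?thesis using True unfolding \<phi>_def by (intro exI[of _ "\<lambda>r c. if r = c then 1 else 0"]) simp
    next
      case False
      then have kn: "k \<le> n" using k by auto
      let ?g = "\<lambda>r c. if c < k \<and> r = sorted_list_of_set (Ja k) ! c then 1 else 0 :: complex"
      have "(\<Sum>K\<in>msub n k. A k (Ia k) K * lam_cha ?g k K {..<k})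
          = (\<Sum>K\<in>msub n k. if K = Ja k then A k (Ia k) K else 0)"
        by (rule sum.cong) (auto simp: minor_delta Ja[OF kn])
      also have "\<dots> = A k (Ia k) (Ja k)" using Ja[OF kn] finite_msub by (simp add: sum.delta')
      finally show ?thesis using False AIJ[OF kn] unfolding \<phi>_def by (intro exI[of _ ?g]) simp
    qed
  qed simp
  then obtain g where g: "\<And>k. k \<le> Suc n \<Longrightarrow> \<phi> k g \<noteq> 0" by auto
  have GL: "GL n g" using g[of "Suc n"] unfolding \<phi>_def GL_def by simp
  let ?ds = "degs n \<nu>"
  define h where "h = rnu n \<nu> (lam_cha g) (Xi n \<nu>)"
  have hH: "h \<in> Hnu n \<nu>" unfolding Hnu_def h_def
    by (rule module.span_base[OF module_tscl]) (use GL in blast)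
  define Is where "Is = map Ia ?ds"
  have dsn: "k < length ?ds \<Longrightarrow> ?ds ! k \<le> n" for k
    by (intro degs_le[of _ n \<nu>]) simp
  have Is: "Is \<in> tidx n ?ds" unfolding tidx_def Is_def using dsn Ia by auto
  have "rnu n \<nu> A h Is = (\<Sum>Js\<in>tidx n ?ds. (\<Prod>k<length ?ds. A (?ds ! k) (Is ! k) (Js ! k)) *
      (\<Prod>k<length ?ds. lam_cha g (?ds ! k) (Js!k) {..<?ds ! k}))"
    unfolding h_def rnu_def[of n \<nu> A] using Is by (auto simp: rnu_Xi intro!: sum.cong)
  also have "\<dots> = (\<Sum>Js\<in>tidx n ?ds. \<Prod>k<length ?ds. A (?ds ! k) (Is ! k) (Js ! k) *
      lam_cha g (?ds ! k) (Js!k) {..<?ds ! k})"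
    by (simp add: prod.distrib)
  also have "\<dots> = (\<Prod>k<length ?ds. \<Sum>K\<in>msub n (?ds ! k). A (?ds ! k) (Is ! k) K *
      lam_cha g (?ds ! k) K {..<?ds ! k})"
    by (rule sum_prod_tidx)
  also have "\<dots> = (\<Prod>k<length ?ds. \<phi> (?ds ! k) g)"
    using dsn unfolding \<phi>_def Is_def by (intro prod.cong) (auto, metis Suc_n_not_le_n)
  also have "\<dots> \<noteq> 0"
    using dsn g by (simp add: prod_zero_iff) (meson le_SucI lessThan_iff)
  finally have "rnu n \<nu> A h Is \<noteq> 0" .
  then have "rnu n \<nu> A h \<noteq> 0" by auto
  then show ?thesis unfolding rho_nonzero_def using hH by blast
qed

end
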